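(* Let $f(n,k)={n\brack k}{n+k\brack k}$. For all integers $n,i,k\ge0$, as an identity of polynomials in $q$, \[ f(n,i)\,f(n,k)=\sum_{j\ge0} q^{(n-j)(k+i-j)}\,{i+k\brack i}{j\brack j-i,\,j-k,\,i+k-j}\, f(n,j). \] Consequently (taking $B(k,j,i)=-(k+i-j)j$ and $C(k,j,r,n)=(rk-j)n$), defining $P^{(1)}_{k,k}=1$, $P^{(1)}_{k,j}=0$ for $j\ne k$ and $P^{(r+1)}_{k,j}=\sum_i q^{-(k+i-j)j}{i+k\brack i}{j\brack j-i,\,j-k,\,i+k-j}P^{(r)}_{k,i}$, one has $f(n,k)^r=\sum_j q^{(rk-j)n}f(n,j)P^{(r)}_{k,j}$ for all $n,k\ge0$, $r\ge1$.
   Context: $q$ is an indeterminate; $(q)_0=1$, $(q)_m=(1-q)(1-q^2)\cdots(1-q^m)$. The $q$-binomial ${n\brack k}=\frac{(q)_n}{(q)_k(q)_{n-k}}$ if $0\le k\le n$ and $0$ otherwise. The $q$-multinomial ${m\brack a,b,c}=\frac{(q)_m}{(q)_a(q)_b(q)_c}$ if $a,b,c\ge0$ and $a+b+c=m$, and $0$ otherwise. *)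

theory Defs
  imports "HOL-Computational_Algebra.Polynomial" "HOL-Computational_Algebra.Fraction_Field"
begin

text \<open>We work in the field of rational functions Q(q) realised as the fraction field
of the polynomial ring int[q]; q is the indeterminate.  Identities there are exactly
identities of polynomials (resp. Laurent polynomials) in q.\<close>

type_synonym qf = "int poly fract"

definition qvar :: qf where
  "qvar = Fract [:0, 1:] 1"

definition qpoch :: "nat \<Rightarrow> qf" where
  "qpoch m = (\<Prod>i\<in>{1..m}. 1 - qvar ^ i)"

definition qbinom :: "int \<Rightarrow> int \<Rightarrow> qf" where
  "qbinom n k = (if 0 \<le> k \<and> k \<le> n
     then qpoch (nat n) / (qpoch (nat k) * qpoch (nat (n - k))) else 0)"

definition qmultinom :: "int \<Rightarrow> int \<Rightarrow> int \<Rightarrow> int \<Rightarrow> qf" where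
  "qmultinom m a b c = (if 0 \<le> a \<and> 0 \<le> b \<and> 0 \<le> c \<and> a + b + c = m
     then qpoch (nat m) / (qpoch (nat a) * qpoch (nat b) * qpoch (nat c)) else 0)"

definition fqb :: "nat \<Rightarrow> nat \<Rightarrow> qf" where
  "fqb n k = qbinom (int n) (int k) * qbinom (int n + int k) (int k)"

definition coefT :: "nat \<Rightarrow> nat \<Rightarrow> nat \<Rightarrow> qf" where
  "coefT i k j = qbinom (int i + int k) (int i)
     * qmultinom (int j) (int j - int i) (int j - int k) (int i + int k - int j)"

text \<open>Pq r k j = P^{(r)}_{k,j} for r \<ge> 1 (the value at r = 0 is an unused dummy).
  The sum over i \<ge> 0 is restricted to i \<le> j since the multinomial vanishes for i > j.\<close>
fun Pq :: "nat \<Rightarrow> nat \<Rightarrow> nat \<Rightarrow> qf" where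
  "Pq 0 k j = 0"
| "Pq (Suc 0) k j = (if j = k then 1 else 0)"
| "Pq (Suc (Suc r)) k j =
     (\<Sum>i\<in>{0..j}. qvar powi (- ((int k + int i - int j) * int j)) * coefT i k j * Pq (Suc r) k i)"

end

theory Submission imports Defs begin

lemma qvar_pow: "qvar ^ m = Fract ([:0,1:] ^ m) 1"
  by (induction m) (auto simp: qvar_def One_fract_def)

lemma qvar_nz: "qvar \<noteq> 0"
  by (simp add: qvar_def Zero_fract_def eq_fract)

lemma one_minus_qpow_nz: "m \<ge> 1 \<Longrightarrow> 1 - qvar ^ m \<noteq> (0::qf)"
proof
  assume m: "m \<ge> 1" and h: "1 - qvar ^ m = 0"
  have "1 - qvar ^ m = Fract (1 - [:0,1:] ^ m) 1"
    by (simp add: qvar_pow One_fract_def)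
  with h have "(1::int poly) - [:0,1:] ^ m = 0"
    by (simp add: Zero_fract_def eq_fract)
  hence "poly ((1::int poly) - [:0,1:] ^ m) 0 = 0" by simp
  with m show False by (simp add: power_0_left)
qed

lemma qpoch_nz: "qpoch m \<noteq> 0"
  unfolding qpoch_def using one_minus_qpow_nz by (auto simp: prod_zero_iff)

lemma qpoch_Suc: "qpoch (Suc m) = qpoch m * (1 - qvar ^ Suc m)"
  unfolding qpoch_def by (simp add: prod.nat_ivl_Suc' mult.commute)


lemma qpoch_0: "qpoch 0 = 1" by (simp add: qpoch_def)

definition rq :: "int \<Rightarrow> qf" where
  "rq m = (if m < 0 then 0 else inverse (qpoch (nat m)))"

lemma rq_rec: "rq (m - 1) = (1 - qvar powi m) * rq m"
proof (cases "m \<ge> 1")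
  case True
  define t where "t = nat m - 1"
  have t: "m = int (Suc t)" using True by (simp add: t_def)
  show ?thesis
  proof -
    have a: "rq (m - 1) = inverse (qpoch t)" by (simp add: t rq_def)
    have b: "rq m = inverse (qpoch (Suc t))" unfolding t rq_def by (simp del: of_nat_Suc)
    have c: "qvar powi m = qvar ^ Suc t" unfolding t by (simp only: power_int_of_nat)
    show ?thesis unfolding a b c qpoch_Suc
      using qpoch_nz[of t] one_minus_qpow_nz[of "Suc t"] by (simp add: field_simps)
  qed
next
  case False
  then show ?thesis by (cases "m = 0") (auto simp: rq_def)
qed

lemma rq_nonneg: "rq (int m) = inverse (qpoch m)"
  by (simp add: rq_def)


lemma qpa: "qvar powi (m + n) = qvar powi m * qvar powi n"
  using qvar_nz by (simp add: power_int_add)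

lemma qpd: "qvar powi (m - n) = qvar powi m / qvar powi n"
  using qvar_nz by (simp add: power_int_diff)

lemma qpm: "qvar powi (- n) = 1 / qvar powi n"
  by (simp add: power_int_minus_divide)

lemma qpi_nz: "qvar powi n \<noteq> 0"
  using qvar_nz by simp

lemma rq_rec': "rq (m - 1) = (1 - qvar powi m) * rq m"
  by (rule rq_rec)

definition Aint :: "nat \<Rightarrow> nat \<Rightarrow> int \<Rightarrow> qf" where
  "Aint i k j = qvar powi (-(j*(int i+int k-j))) * qpoch i * qpoch k * qpoch (i+k)
     * rq j * rq (j - int i) * rq (j - int k) * rq (int i + int k - j)"

definition Dint :: "nat \<Rightarrow> int \<Rightarrow> qf" where
  "Dint i j = qvar ^ Suc i + qvar powi (- int i) - qvar * qvar powi j - qvar powi (- j)"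

lemma key_identity:
  fixes q a b c E Q R :: qf
  assumes "a \<noteq> 0" "b \<noteq> 0" "c \<noteq> 0"
  shows "E * Q * (1-q*a)*(1-q*a*b) * (1 - c/a) * R =
    E*(q*a*b/c) * Q * (1-c)*(1-c/a)*(1-c/b) * R
    - (q*a + 1/a - q*c - 1/c) * (E*c*Q*(1-q*a*b/c)*R)"
proof -
  have h: "(1-q*a)*(1-q*a*b) * (1 - c/a) =
    (q*a*b/c) * (1-c)*(1-c/a)*(1-c/b) - (q*a + 1/a - q*c - 1/c) * (c*(1-q*a*b/c))"
    using assms by (simp add: field_simps)
  have "E * Q * (1-q*a)*(1-q*a*b) * (1 - c/a) * R = (E*Q*R) * ((1-q*a)*(1-q*a*b) * (1 - c/a))"
    by (simp only: ac_simps)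
  also have "\<dots> = (E*Q*R) * ((q*a*b/c) * (1-c)*(1-c/a)*(1-c/b) - (q*a + 1/a - q*c - 1/c) * (c*(1-q*a*b/c)))"
    by (simp only: h)
  also have "\<dots> = E*(q*a*b/c) * Q * (1-c)*(1-c/a)*(1-c/b) * R
    - (q*a + 1/a - q*c - 1/c) * (E*c*Q*(1-q*a*b/c)*R)"
    by (simp only: right_diff_distrib ac_simps)
  finally show ?thesis .
qed

lemma Aint_rec: "Aint (Suc i) k j = Aint i k (j - 1) - Dint i j * Aint i k j"
proof -
  define a where "a = qvar powi int i"
  define b where "b = qvar powi int k"
  define c where "c = qvar powi j"
  define E where "E = qvar powi (-(j*(int i+int k+1-j)))"
  define R where "R = rq j * rq (j - int i) * rq (j - int k) * rq (int i + int k + 1 - j)"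
  define Q where "Q = qpoch i * qpoch k * qpoch (i+k)"
  have nz: "a \<noteq> 0" "b \<noteq> 0" "c \<noteq> 0" unfolding a_def b_def c_def by (simp_all only: qpi_nz not_False_eq_True)
  have pSi: "qvar ^ Suc i = qvar * a" by (simp add: a_def)
  have pSik: "qvar ^ Suc (i+k) = qvar * a * b" by (simp add: a_def b_def power_add)
  have pji: "qvar powi (j - int i) = c / a" by (simp add: qpd a_def c_def)
  have pjk: "qvar powi (j - int k) = c / b" by (simp add: qpd b_def c_def)
  have pikj: "qvar powi (int i + int k + 1 - j) = qvar * a * b / c"
    by (simp add: qpd qpa a_def b_def c_def mult.commute qvar_nz)
  have e1: "qvar powi (-(j*(int (Suc i)+int k-j))) = E"
    unfolding E_def by (simp add: algebra_simps)
  have e2: "qvar powi (-((j-1)*(int i+int k-(j-1)))) = E * (qvar * a * b / c)"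
  proof -
    have "-((j-1)*(int i+int k-(j-1))) = -(j*(int i+int k+1-j)) + (int i + int k + 1 - j)"
      by (simp add: algebra_simps)
    then show ?thesis by (simp only: qpa E_def pikj)
  qed
  have e3: "qvar powi (-(j*(int i+int k-j))) = E * c"
  proof -
    have "-(j*(int i+int k-j)) = -(j*(int i+int k+1-j)) + j"
      by (simp add: algebra_simps)
    then show ?thesis by (simp only: qpa E_def c_def)
  qed
  have h1: "Aint (Suc i) k j = E * Q * (1-qvar*a)*(1-qvar*a*b) * (1 - c/a) * R"
  proof -
    have r1: "rq (j - int (Suc i)) = (1 - c/a) * rq (j - int i)"
      using rq_rec'[of "j - int i"] pji by (simp add: algebra_simps)
    have r2: "int (Suc i) + int k - j = int i + int k + 1 - j" by simp
    have q1: "qpoch (Suc i) = qpoch i * (1 - qvar*a)" using qpoch_Suc[of i] pSi by simp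
    have q2: "qpoch (Suc i + k) = qpoch (i+k) * (1 - qvar*a*b)" using qpoch_Suc[of "i+k"] pSik by simp
    show ?thesis unfolding Aint_def e1 unfolding r1 r2 q1 q2
      by (simp add: Q_def R_def)
  qed
  have h2: "Aint i k (j - 1) = E*(qvar*a*b/c) * Q * (1-c)*(1-c/a)*(1-c/b) * R"
  proof -
    have r1: "rq (j - 1) = (1 - c) * rq j" using rq_rec'[of j] by (simp add: c_def)
    have r2: "rq (j - 1 - int i) = (1 - c/a) * rq (j - int i)"
      using rq_rec'[of "j - int i"] pji by (simp add: algebra_simps)
    have r3: "rq (j - 1 - int k) = (1 - c/b) * rq (j - int k)"
      using rq_rec'[of "j - int k"] pjk by (simp add: algebra_simps)
    have r4: "int i + int k - (j - 1) = int i + int k + 1 - j" by simp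
    show ?thesis unfolding Aint_def e2 unfolding r1 r2 r3 r4
      by (simp add: Q_def R_def ac_simps)
  qed
  have h3: "Aint i k j = E*c*Q*(1-qvar*a*b/c)*R"
  proof -
    have r1: "rq (int i + int k - j) = (1 - qvar*a*b/c) * rq (int i + int k + 1 - j)"
      using rq_rec'[of "int i + int k + 1 - j"] pikj by (simp add: algebra_simps)
    show ?thesis unfolding Aint_def e3 unfolding r1
      by (simp add: Q_def R_def ac_simps)
  qed
  have hD: "Dint i j = qvar*a + 1/a - qvar*c - 1/c"
    unfolding Dint_def pSi by (simp add: qpm a_def c_def)
  show ?thesis unfolding h1 h2 h3 hD by (rule key_identity[OF nz])
qed

fun G :: "nat \<Rightarrow> qf \<Rightarrow> qf" where
  "G 0 x = 1"
| "G (Suc j) x = G j x * (1 - x * qvar ^ Suc j) * (1 - x * qvar powi (- int j))"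

lemma ring_aux:
  fixes x u1 v1 u2 v2 g :: "'a::comm_ring_1"
  assumes "u1*v1 = u2*v2"
  shows "(1-x*u1)*(1-x*v1)*g = g*(1-x*u2)*(1-x*v2) - (u1+v1-u2-v2)*x*g"
proof -
  have "(1-x*u1)*(1-x*v1)*g - (g*(1-x*u2)*(1-x*v2) - (u1+v1-u2-v2)*x*g) = x*x*(u1*v1 - u2*v2)*g"
    by (simp add: algebra_simps)
  also have "\<dots> = 0" using assms by simp
  finally show ?thesis by simp
qed

lemma G_step:
  "(1 - x*qvar^Suc i)*(1 - x*qvar powi(-int i)) * G j x = G (Suc j) x - Dint i (int j) * x * G j x"
proof -
  have e: "qvar ^ Suc i * qvar powi (- int i) = (qvar * qvar ^ j) * qvar powi (- int j)"
    using qvar_nz by (simp add: qpm field_simps)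
  show ?thesis unfolding G.simps Dint_def using ring_aux[OF e, of x "G j x"]
    by (simp add: algebra_simps)
qed

lemma Aint_m1: "Aint i k (-1) = 0"
  by (simp add: Aint_def rq_def)

lemma Aint_top: "Aint i k (int i + int k + 1) = 0"
  by (simp add: Aint_def rq_def)

lemma L1: "G i x * G k x = (\<Sum>j\<in>{0..i+k}. Aint i k (int j) * x^(i+k-j) * G j x)"
proof (induction i)
  case 0
  have "(\<Sum>j\<in>{0..0+k}. Aint 0 k (int j) * x^(0+k-j) * G j x)
      = (\<Sum>j\<in>{k}. Aint 0 k (int j) * x^(0+k-j) * G j x)"
    by (rule sum.mono_neutral_right) (auto simp: Aint_def rq_def)
  also have "\<dots> = G k x" using qpoch_nz[of k] by (simp add: Aint_def rq_def qpoch_0 field_simps)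
  finally show ?case by simp
next
  case (Suc i)
  define F where "F = (1 - x*qvar^Suc i)*(1 - x*qvar powi(-int i))"
  define D where "D = (\<lambda>j::nat. Dint i (int j))"
  have "G (Suc i) x * G k x = F * (G i x * G k x)" by (simp add: F_def ac_simps)
  also have "\<dots> = (\<Sum>j\<in>{0..i+k}. Aint i k (int j) * x^(i+k-j) * (F * G j x))"
    unfolding Suc.IH sum_distrib_left by (simp add: ac_simps)
  also have "\<dots> = (\<Sum>j\<in>{0..i+k}. Aint i k (int j) * x^(i+k-j) * G (Suc j) x)
      - (\<Sum>j\<in>{0..i+k}. D j * Aint i k (int j) * x^(Suc (i+k)-j) * G j x)"
    unfolding F_def G_step sum_subtractf[symmetric] D_def
    by (rule sum.cong) (auto simp: algebra_simps Suc_diff_le)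
  also have "(\<Sum>j\<in>{0..i+k}. Aint i k (int j) * x^(i+k-j) * G (Suc j) x)
      = (\<Sum>j\<in>{0..Suc (i+k)}. Aint i k (int j - 1) * x^(Suc (i+k)-j) * G j x)"
    by (subst sum.atLeast0_atMost_Suc_shift) (simp add: Aint_m1)
  also have "(\<Sum>j\<in>{0..i+k}. D j * Aint i k (int j) * x^(Suc (i+k)-j) * G j x)
      = (\<Sum>j\<in>{0..Suc (i+k)}. D j * Aint i k (int j) * x^(Suc (i+k)-j) * G j x)"
    using Aint_top[of i k] by (subst sum.atLeast0_atMost_Suc) (simp add: ac_simps)
  also have "(\<Sum>j\<in>{0..Suc (i+k)}. Aint i k (int j - 1) * x^(Suc (i+k)-j) * G j x)
      - (\<Sum>j\<in>{0..Suc (i+k)}. D j * Aint i k (int j) * x^(Suc (i+k)-j) * G j x)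
      = (\<Sum>j\<in>{0..Suc i+k}. Aint (Suc i) k (int j) * x^(Suc i+k-j) * G j x)"
    unfolding sum_subtractf[symmetric] Aint_rec D_def
    by (rule sum.cong) (auto simp: algebra_simps)
  finally show ?case .
qed


lemma G_qpow: "j \<le> n \<Longrightarrow> G j (qvar^n) * qpoch (n - j) = qpoch (n + j)"
proof (induction j)
  case 0 then show ?case by simp
next
  case (Suc j)
  have IH: "G j (qvar^n) * qpoch (n - j) = qpoch (n + j)" using Suc by simp
  have e1: "qvar^n * qvar powi (- int j) = qvar ^ (n - j)"
    using Suc.prems qvar_nz by (simp add: qpm power_diff)
  have e2: "qpoch (n - j) = qpoch (n - Suc j) * (1 - qvar ^ (n - j))"
    using Suc.prems qpoch_Suc[of "n - Suc j"] by (simp add: Suc_diff_Suc)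
  have e3: "qpoch (n + Suc j) = qpoch (n + j) * (1 - qvar^n * qvar ^ Suc j)"
    using qpoch_Suc[of "n + j"] by (simp add: power_add)
  show ?case unfolding G.simps e1 e3 IH[symmetric] e2 by (simp add: ac_simps)
qed

lemma G_zero: "n < j \<Longrightarrow> G j (qvar^n) = 0"
proof (induction j)
  case 0 then show ?case by simp
next
  case (Suc j)
  show ?case
  proof (cases "j = n")
    case True
    have "qvar^n * qvar powi (- int n) = 1" using qvar_nz by (simp add: qpm)
    then show ?thesis using True by simp
  next
    case False
    then show ?thesis using Suc by simp
  qed
qed

lemma fqb_G: "fqb n j = G j (qvar^n) * inverse (qpoch j) ^ 2"
proof (cases "j \<le> n")
  case True
  have a: "qbinom (int n) (int j) = qpoch n / (qpoch j * qpoch (n - j))"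
    using True by (simp add: qbinom_def nat_diff_distrib)
  have b: "qbinom (int n + int j) (int j) = qpoch (n + j) / (qpoch j * qpoch n)"
    by (simp add: qbinom_def nat_add_distrib)
  show ?thesis unfolding fqb_def a b G_qpow[OF True, symmetric]
    using qpoch_nz[of n] qpoch_nz[of j] qpoch_nz[of "n-j"] by (simp add: field_simps power2_eq_square)
next
  case False
  then show ?thesis by (simp add: fqb_def qbinom_def G_zero)
qed

lemma qmult_rq: "a + b + c = int m \<Longrightarrow> qmultinom (int m) a b c = qpoch m * rq a * rq b * rq c"
  by (auto simp: qmultinom_def rq_def field_simps qpoch_nz)

lemma part1: "fqb n i * fqb n k =
            (\<Sum>j\<in>{0..i+k}. qvar powi ((int n - int j) * (int k + int i - int j))
                              * coefT i k j * fqb n j)"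
proof -
  define x where "x = qvar ^ n"
  define Ci where "Ci = inverse (qpoch i) ^ 2 * inverse (qpoch k) ^ 2"
  have "fqb n i * fqb n k = Ci * (G i x * G k x)" unfolding fqb_G Ci_def x_def by (simp add: ac_simps)
  also have "\<dots> = (\<Sum>j\<in>{0..i+k}. Ci * (Aint i k (int j) * x^(i+k-j) * G j x))"
    unfolding L1 sum_distrib_left ..
  also have "\<dots> = (\<Sum>j\<in>{0..i+k}. qvar powi ((int n - int j) * (int k + int i - int j))
                              * coefT i k j * fqb n j)"
  proof (rule sum.cong[OF refl])
    fix j assume "j \<in> {0..i+k}"
    then have jle: "j \<le> i + k" by simp
    have ex: "qvar powi ((int n - int j) * (int k + int i - int j)) = x ^ (i+k-j) * qvar powi (-(int j*(int i+int k-int j)))"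
    proof -
      have "int (i+k-j) = int i + int k - int j" using jle by (simp add: of_nat_diff)
      then have "(int n - int j) * (int k + int i - int j) = int n * int (i+k-j) + (-(int j*(int i+int k-int j)))"
        by (simp add: algebra_simps)
      then show ?thesis unfolding x_def by (simp only: qpa power_int_mult power_int_of_nat)
    qed
    have cb: "qbinom (int i + int k) (int i) = qpoch (i+k) / (qpoch i * qpoch k)"
      by (simp add: qbinom_def nat_add_distrib)
    have cm: "qmultinom (int j) (int j - int i) (int j - int k) (int i + int k - int j)
         = qpoch j * rq (int j - int i) * rq (int j - int k) * rq (int i + int k - int j)"
      by (rule qmult_rq) simp
    show "Ci * (Aint i k (int j) * x^(i+k-j) * G j x) =
      qvar powi ((int n - int j) * (int k + int i - int j)) * coefT i k j * fqb n j"
      unfolding ex coefT_def cb cm fqb_G Aint_def Ci_def x_def[symmetric] rq_nonneg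
      using qpoch_nz[of i] qpoch_nz[of k] qpoch_nz[of j]
      by (simp add: field_simps power2_eq_square)
  qed
  finally show ?thesis .
qed


lemma coefT_zero: "j < i \<or> i + k < j \<Longrightarrow> coefT i k j = 0"
  by (auto simp: coefT_def qmultinom_def)

lemma fqb_zero: "n < j \<Longrightarrow> fqb n j = 0"
  by (simp add: fqb_G G_zero)

lemma qexp: "X1 + Y1 = X2 + Y2 \<Longrightarrow> qvar powi X1 * qvar powi Y1 = qvar powi X2 * qvar powi Y2"
  by (simp only: qpa[symmetric])

lemma part2: "fqb n k ^ Suc s =
            (\<Sum>j\<in>{0..n}. qvar powi ((int (Suc s) * int k - int j) * int n) * fqb n j * Pq (Suc s) k j)"
proof (induction s)
  case 0
  show ?case
  proof (cases "k \<le> n")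
    case True
    have "(\<Sum>j\<in>{0..n}. qvar powi ((int (Suc 0) * int k - int j) * int n) * fqb n j * Pq (Suc 0) k j)
        = (\<Sum>j\<in>{k}. qvar powi ((int (Suc 0) * int k - int j) * int n) * fqb n j * Pq (Suc 0) k j)"
      using True by (intro sum.mono_neutral_right) auto
    then show ?thesis by simp
  next
    case False then show ?thesis by (simp add: fqb_zero)
  qed
next
  case (Suc s)
  define T where "T = (\<lambda>i j. qvar powi ((int (Suc s) * int k - int i) * int n) * Pq (Suc s) k i
     * (qvar powi ((int n - int j) * (int k + int i - int j)) * coefT i k j * fqb n j))"
  have "fqb n k ^ Suc (Suc s) = fqb n k ^ Suc s * fqb n k" by simp
  also have "\<dots> = (\<Sum>i\<in>{0..n}. qvar powi ((int (Suc s) * int k - int i) * int n) * Pq (Suc s) k i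
        * (fqb n i * fqb n k))"
    unfolding Suc.IH sum_distrib_right by (simp add: ac_simps)
  also have "\<dots> = (\<Sum>i\<in>{0..n}. \<Sum>j\<in>{0..i+k}. T i j)"
    unfolding part1 sum_distrib_left T_def ..
  also have "\<dots> = (\<Sum>i\<in>{0..n}. \<Sum>j\<in>{0..n+k}. T i j)"
  proof (rule sum.cong[OF refl])
    fix i assume "i \<in> {0..n}"
    then show "(\<Sum>j\<in>{0..i+k}. T i j) = (\<Sum>j\<in>{0..n+k}. T i j)"
      by (intro sum.mono_neutral_left) (auto simp: T_def coefT_zero)
  qed
  also have "\<dots> = (\<Sum>j\<in>{0..n+k}. \<Sum>i\<in>{0..n}. T i j)"
    by (rule sum.swap)
  also have "\<dots> = (\<Sum>j\<in>{0..n+k}. qvar powi ((int (Suc (Suc s)) * int k - int j) * int n) * fqb n j * Pq (Suc (Suc s)) k j)"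
  proof (rule sum.cong[OF refl])
    fix j assume "j \<in> {0..n+k}"
    show "(\<Sum>i\<in>{0..n}. T i j) = qvar powi ((int (Suc (Suc s)) * int k - int j) * int n) * fqb n j * Pq (Suc (Suc s)) k j"
    proof (cases "j \<le> n")
      case False
      then show ?thesis by (simp add: T_def fqb_zero)
    next
      case True
      have "qvar powi ((int (Suc (Suc s)) * int k - int j) * int n) * fqb n j * Pq (Suc (Suc s)) k j
        = (\<Sum>i\<in>{0..j}. qvar powi ((int (Suc (Suc s)) * int k - int j) * int n) * fqb n j *
            (qvar powi (- ((int k + int i - int j) * int j)) * coefT i k j * Pq (Suc s) k i))"
        by (simp only: Pq.simps sum_distrib_left)
      also have "\<dots> = (\<Sum>i\<in>{0..n}. qvar powi ((int (Suc (Suc s)) * int k - int j) * int n) * fqb n j *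
            (qvar powi (- ((int k + int i - int j) * int j)) * coefT i k j * Pq (Suc s) k i))"
        using True by (intro sum.mono_neutral_left) (auto simp: coefT_zero)
      also have "\<dots> = (\<Sum>i\<in>{0..n}. T i j)"
      proof (rule sum.cong[OF refl])
        fix i
        have "qvar powi ((int (Suc (Suc s)) * int k - int j) * int n) * qvar powi (- ((int k + int i - int j) * int j))
          = qvar powi ((int (Suc s) * int k - int i) * int n) * qvar powi ((int n - int j) * (int k + int i - int j))"
          by (rule qexp) (simp add: algebra_simps)
        then show "qvar powi ((int (Suc (Suc s)) * int k - int j) * int n) * fqb n j *
            (qvar powi (- ((int k + int i - int j) * int j)) * coefT i k j * Pq (Suc s) k i) = T i j"
          unfolding T_def by (simp add: ac_simps)
      qed
      finally show ?thesis by simp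
    qed
  qed
  also have "\<dots> = (\<Sum>j\<in>{0..n}. qvar powi ((int (Suc (Suc s)) * int k - int j) * int n) * fqb n j * Pq (Suc (Suc s)) k j)"
    by (intro sum.mono_neutral_right) (auto simp: fqb_zero)
  finally show ?case .
qed

theorem mainTheorem6:
  shows "(\<forall>n i k :: nat.
            fqb n i * fqb n k =
            (\<Sum>j\<in>{0..i+k}. qvar powi ((int n - int j) * (int k + int i - int j))
                              * coefT i k j * fqb n j))
       \<and> (\<forall>n k r :: nat. 1 \<le> r \<longrightarrow>
            fqb n k ^ r =
            (\<Sum>j\<in>{0..n}. qvar powi ((int r * int k - int j) * int n) * fqb n j * Pq r k j))"
proof (intro conjI allI impI)
  fix n i k :: nat
  show "fqb n i * fqb n k =
            (\<Sum>j\<in>{0..i+k}. qvar powi ((int n - int j) * (int k + int i - int j))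
                              * coefT i k j * fqb n j)" by (rule part1)
next
  fix n k r :: nat
  assume "1 \<le> r"
  then obtain s where "r = Suc s" by (cases r) auto
  then show "fqb n k ^ r =
            (\<Sum>j\<in>{0..n}. qvar powi ((int r * int k - int j) * int n) * fqb n j * Pq r k j)"
    using part2 by simp
qed

end
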